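(* Let $\{\lambda_k\}_{k\ge 0}$ be a sequence of positive scalars and, for each $k$, let $x_{\lambda_k}^*$ denote the unique minimizer of $f+\lambda_k h$ over $X$. Then: (a) for all $k\ge 1$, $\displaystyle \|x_{\lambda_k}^*-x_{\lambda_{k-1}}^*\|\le \frac{C_h}{\mu_h}\left|1-\frac{\lambda_{k-1}}{\lambda_k}\right|$; (b) if $\lambda_k\to 0$, then $x_{\lambda_k}^*\to x_h^*$.
   Context: Standing setup: $X\subset\mathbb{R}^n$ is nonempty, compact and convex. $f_1,\dots,f_m:\mathbb{R}^n\to\mathbb{R}$ are convex (possibly nondifferentiable) functions and $f=\sum_{i=1}^m f_i$. $h:\mathbb{R}^n\to\mathbb{R}$ is strongly convex with parameter $\mu_h>0$ (possibly nondifferentiable), i.e. $h(y)\ge h(x)+g^T(y-x)+\frac{\mu_h}{2}\|y-x\|^2$ for all $x,y$ and all $g\in\partial h(x)$. Let $f^*=\min_{x\in X}f(x)$, $X^*=\arg\min_{x\in X}f(x)$, and let $x_h^*$ be the unique minimizer of $h$ over $X^*$ (the bilevel problem: minimize $h(x)$ subject to $x\in X^*$). For $\lambda>0$, $x_\lambda^*$ denotes the unique minimizer of $f+\lambda h$ over $X$. $C_f,C_h$ are constants such that $\|g\|\le C_f$ for every $g\in\partial f_i(x)$, $i=1,\dots,m$, $x\in X$, and $\|g\|\le C_h$ for every $g\in\partial h(x)$, $x\in X$. $\|\cdot\|$ is the Euclidean norm. *)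

theory Defs
  imports "HOL-Analysis.Analysis"
begin

definition subgrad :: "('a::euclidean_space \<Rightarrow> real) \<Rightarrow> 'a \<Rightarrow> 'a set" where
  "subgrad h x = {g. \<forall>y. h y \<ge> h x + inner g (y - x)}"

definition strongly_convex :: "('a::euclidean_space \<Rightarrow> real) \<Rightarrow> real \<Rightarrow> bool" where
  "strongly_convex h mu \<longleftrightarrow> convex_on UNIV h \<and> mu > 0 \<and>
     (\<forall>x y. \<forall>g\<in>subgrad h x. h y \<ge> h x + inner g (y - x) + mu / 2 * (norm (y - x))\<^sup>2)"

definition argmin_set :: "('a \<Rightarrow> real) \<Rightarrow> 'a set \<Rightarrow> 'a set" where
  "argmin_set F X = {x \<in> X. \<forall>y\<in>X. F x \<le> F y}"

end

theory Submission
  imports Defs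
begin
lemma subgrad_exists:
  fixes h :: "'a::euclidean_space \<Rightarrow> real"
  assumes cvx: "convex_on UNIV h"
  shows "\<exists>g. g \<in> subgrad h x"
proof -
  define S where "S = {p :: 'a \<times> real. h (fst p) < snd p}"
  have cS: "convex S"
    unfolding convex_def
  proof (intro ballI allI impI)
    fix p q :: "'a \<times> real" and u v :: real
    assume p: "p \<in> S" and q: "q \<in> S" and uv: "0 \<le> u" "0 \<le> v" "u + v = 1"
    have u: "u = 1 - v" using uv by simp
    have "h (u *\<^sub>R fst p + v *\<^sub>R fst q) \<le> u * h (fst p) + v * h (fst q)"
      using convex_onD[OF cvx, of v "fst p" "fst q"] uv unfolding u by simp
    also have "\<dots> \<le> u * snd p + v * snd q"
      using p q uv unfolding S_def by (intro add_mono mult_left_mono) auto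
    finally have le: "h (u *\<^sub>R fst p + v *\<^sub>R fst q) \<le> u * snd p + v * snd q" .
    have "u * h (fst p) + v * h (fst q) < u * snd p + v * snd q"
    proof (cases "u = 0")
      case True then have "v = 1" using uv by simp
      then show ?thesis using True q unfolding S_def by simp
    next
      case False then have "u > 0" using uv by simp
      then have "u * h (fst p) < u * snd p" using p unfolding S_def by simp
      moreover have "v * h (fst q) \<le> v * snd q" using q uv unfolding S_def
        by (intro mult_left_mono) auto
      ultimately show ?thesis by simp
    qed
    then show "u *\<^sub>R p + v *\<^sub>R q \<in> S"
      using convex_onD[OF cvx, of v "fst p" "fst q"] uv unfolding S_def u by simp
  qed
  have "(x, h x + 1) \<in> S" unfolding S_def by simp
  then have "S \<noteq> {}" by blast
  moreover have "{(x, h x)} \<inter> S = {}" unfolding S_def by auto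
  ultimately obtain a b where ab: "a \<noteq> 0" "\<forall>p\<in>S. inner a p \<le> b" "\<forall>p\<in>{(x, h x)}. inner a p \<ge> b"
    using separating_hyperplane_sets[OF cS convex_singleton, of "(x, h x)"] by blast
  obtain v c where a: "a = (v, c)" by (cases a)
  have main: "inner v y + c * (h y + s) \<le> inner v x + c * h x" if "s > 0" for y s
  proof -
    have "(y, h y + s) \<in> S" using that unfolding S_def by simp
    then have "inner a (y, h y + s) \<le> b" using ab by blast
    moreover have "inner a (x, h x) \<ge> b" using ab by blast
    ultimately show ?thesis unfolding a by simp
  qed
  have "c \<le> 0" using main[of 1 x] by (simp add: distrib_left)
  moreover have "c \<noteq> 0"
  proof
    assume c0: "c = 0"
    then have "v \<noteq> 0" using ab a by (auto simp: zero_prod_def)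
    have "inner v (x + v) \<le> inner v x" using main[of 1 "x + v"] c0 by simp
    then have "inner v v \<le> 0" by (simp add: inner_add_right)
    then show False using \<open>v \<noteq> 0\<close> by (metis inner_gt_zero_iff not_le)
  qed
  ultimately have cneg: "c < 0" by simp
  have key: "inner v y + c * h y \<le> inner v x + c * h x" for y
  proof (rule ccontr)
    assume nt: "\<not> ?thesis"
    define d where "d = inner v y + c * h y - (inner v x + c * h x)"
    have d: "d > 0" using nt unfolding d_def by simp
    have "inner v y + c * (h y + d / (- 2 * c)) \<le> inner v x + c * h x"
      proof (rule main)
      show "d / (- 2 * c) > 0" using d cneg by (simp add: divide_pos_neg)
    qed
    moreover have "c * (h y + d / (- 2 * c)) = c * h y - d / 2" using cneg by (simp add: field_simps)
    ultimately have "inner v y + c * h y - d / 2 \<le> inner v x + c * h x"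
      by linarith
    then have "d - d / 2 \<le> 0" unfolding d_def by (simp add: algebra_simps)
    then show False using d by simp
  qed
  show ?thesis
  proof (intro exI)
    show "(- (1 / c)) *\<^sub>R v \<in> subgrad h x"
      unfolding subgrad_def
    proof (intro CollectI allI)
      fix y
      have "c * h y \<le> c * h x + (inner v x - inner v y)" using key[of y] by simp
      then have "h y \<ge> h x + (inner v x - inner v y) / c"
        using cneg by (simp add: field_simps)
      moreover have "inner ((- (1 / c)) *\<^sub>R v) (y - x) = (inner v x - inner v y) / c"
        by (simp add: inner_diff_right diff_divide_distrib)
      ultimately show "h x + inner ((- (1 / c)) *\<^sub>R v) (y - x) \<le> h y" by simp
    qed
  qed
qed

lemma sc_comb:
  fixes h :: "'a::euclidean_space \<Rightarrow> real"
  assumes sc: "strongly_convex h mu" and t: "0 \<le> t" "t \<le> 1"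
  shows "h ((1-t) *\<^sub>R b + t *\<^sub>R y) \<le> (1-t) * h b + t * h y - mu/2 * (t*(1-t)) * (norm (y-b))\<^sup>2"
proof -
  define z where "z = (1-t) *\<^sub>R b + t *\<^sub>R y"
  have cvx: "convex_on UNIV h" and scd: "\<And>x y g. g \<in> subgrad h x \<Longrightarrow> h y \<ge> h x + inner g (y - x) + mu / 2 * (norm (y - x))\<^sup>2"
    using sc unfolding strongly_convex_def by auto
  obtain g where g: "g \<in> subgrad h z" using subgrad_exists[OF cvx] by blast
  have bz: "b - z = t *\<^sub>R (b - y)" unfolding z_def by (simp add: algebra_simps)
  have yz: "y - z = (1-t) *\<^sub>R (y - b)" unfolding z_def by (simp add: algebra_simps)
  define N where "N = (norm (y - b))\<^sup>2"
  define G where "G = inner g (b - y)"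
  have nb: "(norm (b - z))\<^sup>2 = t\<^sup>2 * N" unfolding bz N_def using t
    by (simp add: power_mult_distrib norm_minus_commute)
  have ny: "(norm (y - z))\<^sup>2 = (1-t)\<^sup>2 * N" unfolding yz N_def using t
    by (simp add: power_mult_distrib)
  have gb: "inner g (b - z) = t * G" unfolding bz G_def by simp
  have gy: "inner g (y - z) = - ((1-t) * G)" unfolding yz G_def
    by (simp add: inner_diff_right algebra_simps)
  have i1: "h b \<ge> h z + t * G + mu/2 * (t\<^sup>2 * N)" using scd[OF g, of b] nb gb by simp
  have i2: "h y \<ge> h z - (1-t) * G + mu/2 * ((1-t)\<^sup>2 * N)" using scd[OF g, of y] ny gy by simp
  have "(1-t) * h b \<ge> (1-t) * (h z + t * G + mu/2 * (t\<^sup>2 * N))"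
    using i1 t by (intro mult_left_mono) auto
  moreover have "t * h y \<ge> t * (h z - (1-t) * G + mu/2 * ((1-t)\<^sup>2 * N))"
    using i2 t by (intro mult_left_mono) auto
  moreover have "(1-t) * (h z + t * G + mu/2 * (t\<^sup>2 * N)) + t * (h z - (1-t) * G + mu/2 * ((1-t)\<^sup>2 * N))
      = h z + mu/2 * (t*(1-t)) * N"
    by (simp add: algebra_simps power2_eq_square add_divide_distrib diff_divide_distrib)
  ultimately show ?thesis unfolding z_def[symmetric] N_def[symmetric] by linarith
qed

lemma h_lip:
  fixes h :: "'a::euclidean_space \<Rightarrow> real"
  assumes cvx: "convex_on UNIV h"
    and bd: "\<And>x g. x \<in> X \<Longrightarrow> g \<in> subgrad h x \<Longrightarrow> norm g \<le> C"
    and x: "x \<in> X"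
  shows "h x - h y \<le> C * norm (y - x)"
proof -
  obtain g where g: "g \<in> subgrad h x" using subgrad_exists[OF cvx] by blast
  have "h y \<ge> h x + inner g (y - x)" using g unfolding subgrad_def by auto
  moreover have "inner g (y - x) \<ge> - (norm g * norm (y - x))"
    using Cauchy_Schwarz_ineq2[of g "y - x"] by (simp add: abs_le_iff)
  moreover have "norm g * norm (y - x) \<le> C * norm (y - x)"
    using bd[OF x g] by (intro mult_right_mono) auto
  ultimately show ?thesis by linarith
qed

lemma lim_t:
  fixes P Q :: real
  assumes P: "P \<ge> 0" and H: "\<And>t. 0 < t \<Longrightarrow> t < 1 \<Longrightarrow> (1 - t) * P \<le> Q"
  shows "P \<le> Q"
proof (rule ccontr)
  assume "\<not> P \<le> Q"
  then have PQ: "Q < P" by simp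
  then have Pp: "P > 0" using P H[of "1/2"] by simp
  show False
  proof (cases "Q \<le> - P")
    case True
    then show ?thesis using H[of "1/2"] Pp by simp
  next
    case False
    define t where "t = (P - Q) / (2 * P)"
    have t0: "t > 0" unfolding t_def using PQ Pp by simp
    have t1: "t < 1" unfolding t_def using False Pp by (simp add: field_simps)
    have "(1 - t) * P = (P + Q) / 2" unfolding t_def using Pp by (simp add: field_simps)
    then show False using H[OF t0 t1] PQ by simp
  qed
qed

lemma part_a:
  fixes X :: "'a::euclidean_space set" and f h :: "'a \<Rightarrow> real"
  assumes cX: "convex X" and cf: "convex_on UNIV f" and sc: "strongly_convex h mu"
    and bd: "\<And>x g. x \<in> X \<Longrightarrow> g \<in> subgrad h x \<Longrightarrow> norm g \<le> C"
    and l: "l > 0" and l': "l' > 0"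
    and a: "a \<in> argmin_set (\<lambda>x. f x + l' * h x) X"
    and b: "b \<in> argmin_set (\<lambda>x. f x + l * h x) X"
  shows "norm (b - a) \<le> C / mu * \<bar>1 - l' / l\<bar>"
proof -
  have ch: "convex_on UNIV h" and mu: "mu > 0" using sc unfolding strongly_convex_def by auto
  have aX: "a \<in> X" and aopt: "\<And>y. y \<in> X \<Longrightarrow> f a + l' * h a \<le> f y + l' * h y"
    using a unfolding argmin_set_def by auto
  have bX: "b \<in> X" and bopt: "\<And>y. y \<in> X \<Longrightarrow> f b + l * h b \<le> f y + l * h y"
    using b unfolding argmin_set_def by auto
  obtain g0 where "g0 \<in> subgrad h a" using subgrad_exists[OF ch] by blast
  then have C0: "C \<ge> 0" using bd[OF aX] norm_ge_zero order_trans by blast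
  define d where "d = norm (b - a)"
  have d0: "d \<ge> 0" unfolding d_def by simp
  have key: "l * mu * (1 - t) * d\<^sup>2 \<le> \<bar>l - l'\<bar> * C * d" if t: "0 < t" "t < 1" for t
  proof -
    define zb where "zb = (1-t) *\<^sub>R b + t *\<^sub>R a"
    define za where "za = (1-t) *\<^sub>R a + t *\<^sub>R b"
    have zbX: "zb \<in> X" unfolding zb_def using cX aX bX t by (intro convexD) auto
    have zaX: "za \<in> X" unfolding za_def using cX aX bX t by (intro convexD) auto
    have o1: "f b + l * h b \<le> f zb + l * h zb" using bopt[OF zbX] .
    have o2: "f a + l' * h a \<le> f za + l' * h za" using aopt[OF zaX] .
    have f1: "f zb \<le> (1-t) * f b + t * f a" unfolding zb_def using convex_onD[OF cf, of t b a] t by simp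
    have f2: "f za \<le> (1-t) * f a + t * f b" unfolding za_def using convex_onD[OF cf, of t a b] t by simp
    have h1: "h zb \<le> (1-t) * h b + t * h a - mu/2 * (t*(1-t)) * d\<^sup>2"
      unfolding zb_def d_def using sc_comb[OF sc, of t b a] t by (simp add: norm_minus_commute)
    have h2: "h za \<le> (1-t) * h a + t * h b - mu/2 * (t*(1-t)) * d\<^sup>2"
      unfolding za_def d_def using sc_comb[OF sc, of t a b] t by simp
    have nza: "norm (za - a) = t * d" unfolding za_def d_def using t
      by (simp add: algebra_simps flip: scaleR_diff_right)
    have la1: "h za - h a \<le> C * (t * d)" using h_lip[OF ch bd zaX, where y=a] nza by (simp add: norm_minus_commute)
    have la2: "h a - h za \<le> C * (t * d)" using h_lip[OF ch bd aX, where y=za] nza by simp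
    define Hb where "Hb = h zb - h b"
    define Ha where "Ha = h za - h a"
    have s1: "0 \<le> t * (f a - f b) + l * Hb" using o1 f1 unfolding Hb_def by (simp add: algebra_simps)
    have s2: "0 \<le> t * (f b - f a) + l' * Ha" using o2 f2 unfolding Ha_def by (simp add: algebra_simps)
    have sum: "Hb + Ha \<le> - (mu * (t*(1-t)) * d\<^sup>2)" proof -
      have "mu/2 * (t*(1-t)) * d\<^sup>2 + mu/2 * (t*(1-t)) * d\<^sup>2 = mu * (t*(1-t)) * d\<^sup>2" by simp
      moreover have "(1-t)*h b + t*h a + ((1-t)*h a + t*h b) = h a + h b" by (simp add: algebra_simps)
      ultimately show ?thesis using h1 h2 unfolding Ha_def Hb_def by linarith
    qed
    have A: "l * (Hb + Ha) \<le> l * (- (mu * (t*(1-t)) * d\<^sup>2))" using sum l by (intro mult_left_mono) auto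
    have absHa: "\<bar>Ha\<bar> \<le> C * (t * d)" using la1 la2 unfolding Ha_def by simp
    have B: "- ((l - l') * Ha) \<le> \<bar>l - l'\<bar> * (C * (t * d))"
    proof -
      have "- ((l - l') * Ha) \<le> \<bar>l - l'\<bar> * \<bar>Ha\<bar>" by (simp add: abs_mult[symmetric])
      also have "\<dots> \<le> \<bar>l - l'\<bar> * (C * (t * d))" using absHa by (intro mult_left_mono) auto
      finally show ?thesis .
    qed
    have "l * Hb + l' * Ha = l * (Hb + Ha) - (l - l') * Ha" by (simp add: algebra_simps)
    then have "0 \<le> l * (- (mu * (t*(1-t)) * d\<^sup>2)) + \<bar>l - l'\<bar> * (C * (t * d))"
      using s1 s2 A B by (smt (verit) right_diff_distrib)
    then have "t * (l * mu * (1 - t) * d\<^sup>2) \<le> t * (\<bar>l - l'\<bar> * C * d)"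
      by (simp add: algebra_simps)
    then show ?thesis using t by simp
  qed
  have main: "l * mu * d \<le> \<bar>l - l'\<bar> * C"
  proof (cases "d = 0")
    case True then show ?thesis using C0 by simp
  next
    case False
    then have dp: "d > 0" using d0 by simp
    show ?thesis
    proof (rule lim_t)
      show "0 \<le> l * mu * d" using l mu d0 by simp
      fix t :: real assume "0 < t" "t < 1"
      from key[OF this] have "d * ((1 - t) * (l * mu * d)) \<le> d * (\<bar>l - l'\<bar> * C)"
        by (simp add: algebra_simps power2_eq_square)
      then show "(1 - t) * (l * mu * d) \<le> \<bar>l - l'\<bar> * C" using dp by simp
    qed
  qed
  have "\<bar>1 - l' / l\<bar> = \<bar>l - l'\<bar> / l" using l by (simp add: field_simps abs_div_pos[symmetric])
  then have "C / mu * \<bar>1 - l' / l\<bar> = (\<bar>l - l'\<bar> * C) / (l * mu)" by (simp add: mult.commute)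
  moreover have "d \<le> (\<bar>l - l'\<bar> * C) / (l * mu)" using main l mu by (simp add: field_simps)
  ultimately show ?thesis unfolding d_def by simp
qed

lemma part_b:
  fixes X :: "'a::euclidean_space set" and f h :: "'a \<Rightarrow> real"
  assumes kX: "compact X" and cX: "convex X" and cf: "convex_on UNIV f" and sc: "strongly_convex h mu"
    and xh: "xh \<in> argmin_set h (argmin_set f X)"
    and lam: "\<And>k. lam k > 0"
    and xs: "\<And>k. xs k \<in> argmin_set (\<lambda>x. f x + lam k * h x) X"
    and lim: "lam \<longlonglongrightarrow> 0"
  shows "xs \<longlonglongrightarrow> xh"
proof -
  have ch: "convex_on UNIV h" and mu: "mu > 0" using sc unfolding strongly_convex_def by auto
  have contf: "continuous_on UNIV f" by (rule convex_on_continuous[OF open_UNIV cf])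
  have conth: "continuous_on UNIV h" by (rule convex_on_continuous[OF open_UNIV ch])
  have xhX: "xh \<in> X" and fmin: "\<And>y. y \<in> X \<Longrightarrow> f xh \<le> f y"
    and hmin: "\<And>y. y \<in> argmin_set f X \<Longrightarrow> h xh \<le> h y"
    using xh unfolding argmin_set_def by auto
  have xsX: "\<And>k. xs k \<in> X" and xsopt: "\<And>k y. y \<in> X \<Longrightarrow> f (xs k) + lam k * h (xs k) \<le> f y + lam k * h y"
    using xs unfolding argmin_set_def by auto
  obtain ymin where yminX: "ymin \<in> X" and ymin: "\<And>y. y \<in> X \<Longrightarrow> h ymin \<le> h y"
    using continuous_attains_inf[OF kX _ continuous_on_subset[OF conth]] xhX by blast
  define M where "M = h xh - h ymin"
  have hk: "h (xs k) \<le> h xh" and fk: "f (xs k) - f xh \<le> lam k * M" for k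
  proof -
    have o: "f (xs k) + lam k * h (xs k) \<le> f xh + lam k * h xh" using xsopt[OF xhX] .
    have "f xh \<le> f (xs k)" using fmin[OF xsX] .
    then have "lam k * h (xs k) \<le> lam k * h xh" using o by linarith
    then show "h (xs k) \<le> h xh" using lam[of k] by simp
    have "lam k * (h xh - h (xs k)) \<le> lam k * M" unfolding M_def using ymin[OF xsX[of k]] lam[of k]
      by (intro mult_left_mono) auto
    then show "f (xs k) - f xh \<le> lam k * M" using o by (simp add: algebra_simps)
  qed
  have uniq: "y = xh" if yX: "y \<in> X" and fy: "f y \<le> f xh" and hy: "h y \<le> h xh" for y
  proof -
    define m where "m = (1 - 1/2) *\<^sub>R xh + (1/2::real) *\<^sub>R y"
    have mX: "m \<in> X" unfolding m_def using cX xhX yX by (intro convexD) auto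
    have "f m \<le> (1 - 1/2) * f xh + 1/2 * f y" unfolding m_def using convex_onD[OF cf, of "1/2" xh y] by simp
    then have "f m \<le> f xh" using fy by simp
    then have "m \<in> argmin_set f X" using mX fmin unfolding argmin_set_def by force
    then have "h xh \<le> h m" by (rule hmin)
    moreover have "h m \<le> (1 - 1/2) * h xh + 1/2 * h y - mu/2 * ((1/2)*(1-1/2)) * (norm (y - xh))\<^sup>2"
      unfolding m_def using sc_comb[OF sc, of "1/2" xh y] by simp
    ultimately have "mu/2 * ((1/2)*(1-1/2)) * (norm (y - xh))\<^sup>2 \<le> (1 - 1/2) * h xh + 1/2 * h y - h xh"
      by linarith
    also have "\<dots> \<le> 0" using hy by simp
    finally have "mu * (norm (y - xh))\<^sup>2 \<le> 0" by simp
    then have "(norm (y - xh))\<^sup>2 \<le> 0" using mu by (simp add: mult_le_0_iff)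
    then show "y = xh" by simp
  qed
  show ?thesis
    unfolding tendsto_iff
  proof (intro allI impI)
    fix e :: real assume e: "e > 0"
    define K where "K = X \<inter> {y. e \<le> dist y xh} \<inter> {y. h y \<le> h xh}"
    have notK: "dist (xs k) xh < e" if "xs k \<notin> K" for k
      using that xsX[of k] hk[of k] unfolding K_def by auto
    show "\<forall>\<^sub>F k in sequentially. dist (xs k) xh < e"
    proof (cases "K = {}")
      case True then show ?thesis using notK by auto
    next
      case False
      have "closed ({y. e \<le> dist y xh} \<inter> {y. h y \<le> h xh})"
        by (intro closed_Int closed_Collect_le continuous_intros continuous_on_subset[OF conth]) auto
      then have kK: "compact K" unfolding K_def using compact_Int_closed[OF kX] by (simp add: Int_assoc)
      obtain y0 where y0K: "y0 \<in> K" and y0: "\<And>y. y \<in> K \<Longrightarrow> f y0 \<le> f y"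
        using continuous_attains_inf[OF kK False continuous_on_subset[OF contf]] by blast
      have "f y0 > f xh"
      proof (rule ccontr)
        assume "\<not> ?thesis"
        then have "y0 = xh" using uniq[of y0] y0K unfolding K_def by auto
        then show False using y0K e unfolding K_def by auto
      qed
      define dl where "dl = f y0 - f xh"
      have dl: "dl > 0" unfolding dl_def using \<open>f y0 > f xh\<close> by simp
      have "(\<lambda>k. lam k * M) \<longlonglongrightarrow> 0 * M" by (intro tendsto_mult lim tendsto_const)
      then have "\<forall>\<^sub>F k in sequentially. lam k * M < dl" using dl by (simp add: order_tendstoD(2))
      then show ?thesis
      proof (rule eventually_mono)
        fix k assume "lam k * M < dl"
        then have "f (xs k) < f y0" using fk[of k] unfolding dl_def by simp
        then have "xs k \<notin> K" using y0 by force
        then show "dist (xs k) xh < e" by (rule notK)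
      qed
    qed
  qed
qed


theorem lemma1:
  fixes X :: "'a::euclidean_space set"
    and fs :: "nat \<Rightarrow> 'a \<Rightarrow> real" and m :: nat
    and f h :: "'a \<Rightarrow> real" and mu_h C_f C_h :: real
    and lam :: "nat \<Rightarrow> real" and xs :: "nat \<Rightarrow> 'a" and xh :: 'a
  assumes "X \<noteq> {}" and "compact X" and "convex X"
    and "\<And>i. i \<in> {1..m} \<Longrightarrow> convex_on UNIV (fs i)"
    and "f = (\<lambda>x. \<Sum>i=1..m. fs i x)"
    and "strongly_convex h mu_h"
    and "\<And>i x g. i \<in> {1..m} \<Longrightarrow> x \<in> X \<Longrightarrow> g \<in> subgrad (fs i) x \<Longrightarrow> norm g \<le> C_f"
    and "\<And>x g. x \<in> X \<Longrightarrow> g \<in> subgrad h x \<Longrightarrow> norm g \<le> C_h"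
    and "xh \<in> argmin_set h (argmin_set f X)"
    and "\<And>k. lam k > 0"
    and "\<And>k. xs k \<in> argmin_set (\<lambda>x. f x + lam k * h x) X"
  shows "(\<forall>k\<ge>1. norm (xs k - xs (k - 1)) \<le> C_h / mu_h * \<bar>1 - lam (k - 1) / lam k\<bar>)
         \<and> (lam \<longlonglongrightarrow> 0 \<longrightarrow> xs \<longlonglongrightarrow> xh)"
  proof -
  have cf: "convex_on UNIV f"
    unfolding assms(5)
  proof (rule convex_onI)
    fix t :: real and x y :: 'a
    assume t: "0 < t" "t < 1"
    have "(\<Sum>i=1..m. fs i ((1 - t) *\<^sub>R x + t *\<^sub>R y)) \<le> (\<Sum>i=1..m. (1 - t) * fs i x + t * fs i y)"
      using assms(4) t by (intro sum_mono convex_onD) auto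
    also have "\<dots> = (1 - t) * (\<Sum>i=1..m. fs i x) + t * (\<Sum>i=1..m. fs i y)"
      by (simp add: sum.distrib sum_distrib_left)
    finally show "(\<Sum>i=1..m. fs i ((1 - t) *\<^sub>R x + t *\<^sub>R y)) \<le> (1 - t) * (\<Sum>i=1..m. fs i x) + t * (\<Sum>i=1..m. fs i y)" .
  qed simp
  show ?thesis
  proof
    show "\<forall>k\<ge>1. norm (xs k - xs (k - 1)) \<le> C_h / mu_h * \<bar>1 - lam (k - 1) / lam k\<bar>"
    proof (intro allI impI)
      fix k :: nat
      show "norm (xs k - xs (k - 1)) \<le> C_h / mu_h * \<bar>1 - lam (k - 1) / lam k\<bar>"
        by (rule part_a[OF assms(3) cf assms(6)]) (use assms(8,10,11) in auto)
    qed
    show "lam \<longlonglongrightarrow> 0 \<longrightarrow> xs \<longlonglongrightarrow> xh"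
      using part_b[OF assms(2) assms(3) cf assms(6) assms(9), of lam xs] assms(10,11) by blast
  qed
qed

end
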